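(* For any $\alpha,\beta\in\mathbb{R}$, the problem $\ddot y+3y+\frac32y^3=0$, $y(0)=\alpha$, $\dot y(0)=\beta$ admits a unique solution $\overline y$, which is periodic of period $$T(E)=\frac{8}{\sqrt3}\int_0^1\frac{ds}{\sqrt{(\Lambda_+(E)+\Lambda_-(E)s^2)(1-s^2)}},$$ where $E=\frac{\beta^2}{2}+\frac32\alpha^2+\frac38\alpha^4$ and $\Lambda_\pm(E)=2\sqrt{1+\frac23E}\pm2$. Moreover, the map $E\mapsto T(E)$ is strictly decreasing and $\lim_{E\to0}T(E)=2\pi/\sqrt3$. *)

theory Defs
  imports "HOL-Analysis.Analysis"
begin

definition ivp_sol :: "real \<Rightarrow> real \<Rightarrow> (real \<Rightarrow> real) \<Rightarrow> bool" where
  "ivp_sol \<alpha> \<beta> y \<longleftrightarrow>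
     (\<exists>y'. (\<forall>t. (y has_real_derivative y' t) (at t)) \<and>
           (\<forall>t. (y' has_real_derivative (- (3 * y t + 3/2 * (y t)^3))) (at t)) \<and>
           y 0 = \<alpha> \<and> y' 0 = \<beta>)"

definition energy :: "real \<Rightarrow> real \<Rightarrow> real" where
  "energy \<alpha> \<beta> = \<beta>^2 / 2 + 3/2 * \<alpha>^2 + 3/8 * \<alpha>^4"

definition Lambda_plus :: "real \<Rightarrow> real" where
  "Lambda_plus E = 2 * sqrt (1 + 2/3 * E) + 2"

definition Lambda_minus :: "real \<Rightarrow> real" where
  "Lambda_minus E = 2 * sqrt (1 + 2/3 * E) - 2"

definition period :: "real \<Rightarrow> real" where
  "period E = 8 / sqrt 3 *
     integral {0..1} (\<lambda>s. 1 / sqrt ((Lambda_plus E + Lambda_minus E * s^2) * (1 - s^2)))"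

end

theory Submission
  imports Defs
begin


definition gg :: "real \<Rightarrow> real \<Rightarrow> real" where
  "gg E x = sqrt 3 / 2 * sqrt (Lambda_plus E + Lambda_minus E * (sin x)^2)"

definition kk :: "real \<Rightarrow> real \<Rightarrow> real" where
  "kk E x = 1 / gg E x"

lemma Lam_basic:
  assumes "0 \<le> E"
  shows "0 \<le> Lambda_minus E" "Lambda_plus E = Lambda_minus E + 4"
proof -
  have "1 \<le> sqrt (1 + 2/3 * E)" using assms by simp
  then show "0 \<le> Lambda_minus E" by (simp add: Lambda_minus_def)
  show "Lambda_plus E = Lambda_minus E + 4" by (simp add: Lambda_minus_def Lambda_plus_def)
qed

lemma gg_pos: "0 \<le> E \<Longrightarrow> 0 < gg E x"
proof -
  assume E: "0 \<le> E"
  have "0 \<le> Lambda_minus E * (sin x)^2" using Lam_basic(1)[OF E] by simp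
  then have "0 < Lambda_plus E + Lambda_minus E * (sin x)^2" using Lam_basic[OF E] by linarith
  then show ?thesis by (simp add: gg_def)
qed

lemma kk_pos: "0 \<le> E \<Longrightarrow> 0 < kk E x"
  using gg_pos by (simp add: kk_def)

lemma cont_kk: "0 \<le> E \<Longrightarrow> continuous_on UNIV (kk E)"
proof -
  assume E: "0 \<le> E"
  have c: "continuous_on UNIV (gg E)" unfolding gg_def by (intro continuous_intros)
  show ?thesis unfolding kk_def
  proof (rule continuous_on_divide)
    show "\<forall>x\<in>UNIV. gg E x \<noteq> 0" using gg_pos[OF E] by (metis less_irrefl)
  qed (use c in \<open>auto intro: continuous_intros\<close>)
qed

lemma antideriv:
  assumes "0 \<le> E"
  shows "\<exists>F. F a = 0 \<and> (\<forall>x. (F has_real_derivative kk E x) (at x))"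
proof -
  have "\<exists>F. \<forall>x :: real. -\<infinity> < x \<longrightarrow> x < \<infinity> \<longrightarrow> (F has_vector_derivative kk E x) (at x)"
    by (rule einterval_antiderivative) (use cont_kk[OF assms] in \<open>auto simp: continuous_on_eq_continuous_at\<close>)
  then obtain F where F: "\<And>x. (F has_real_derivative kk E x) (at x)"
    by (auto simp: has_real_derivative_iff_has_vector_derivative)
  show ?thesis
    by (rule exI[of _ "\<lambda>x. F x - F a"]) (auto intro!: derivative_eq_intros F)
qed

lemma const_deriv0:
  fixes D :: "real \<Rightarrow> real"
  assumes "\<And>x. (D has_real_derivative 0) (at x)"
  shows "D x = D y"
  using assms DERIV_isconst_all by blast

lemma kk_pi: "kk E (x + pi) = kk E x"
  by (simp add: kk_def gg_def)

lemma kk_refl: "kk E (pi/2 + x) = kk E (pi/2 - x)"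
  by (simp add: kk_def gg_def sin_add sin_diff)

lemma shiftD: assumes F: "\<And>x. (F has_real_derivative f x) (at x)"
  shows "((\<lambda>x. F (x + c)) has_real_derivative f (x + c)) (at x)"
  using F[of "x+c"] DERIV_shift by blast

lemma reflD: assumes F: "\<And>x. (F has_real_derivative f x) (at x)"
  shows "((\<lambda>x. F (c - x)) has_real_derivative f (c - x) * (-1)) (at x)"
proof -
  have "((\<lambda>x. c - x) has_real_derivative -1) (at x)" by (auto intro!: derivative_eq_intros)
  from DERIV_chain2[OF F this] show ?thesis .
qed

lemma F_shift:
  assumes F: "\<And>x. (F has_real_derivative kk E x) (at x)"
  shows "F (x + 2*pi) - F x = 4 * (F (pi/2) - F 0)"
proof -
  have d1: "\<And>x. ((\<lambda>x. F (x + pi) - F x) has_real_derivative 0) (at x)"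
  proof -
    fix x
    have "((\<lambda>x. F (x + pi) - F x) has_real_derivative kk E (x+pi) - kk E x) (at x)"
      by (intro derivative_intros shiftD[OF F] F)
    then show "((\<lambda>x. F (x + pi) - F x) has_real_derivative 0) (at x)" by (simp add: kk_pi)
  qed
  have d2: "\<And>x. ((\<lambda>x. F (pi/2 + x) + F (pi/2 - x)) has_real_derivative 0) (at x)"
  proof -
    fix x
    have "((\<lambda>x. F (x + pi/2) + F (pi/2 - x)) has_real_derivative kk E (x + pi/2) + kk E (pi/2 - x) * (-1)) (at x)"
      by (intro derivative_intros shiftD[OF F] reflD[OF F])
    then have "((\<lambda>x. F (pi/2 + x) + F (pi/2 - x)) has_real_derivative kk E (pi/2 + x) + kk E (pi/2 - x) * (-1)) (at x)"
      by (simp add: add.commute)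
    then show "((\<lambda>x. F (pi/2 + x) + F (pi/2 - x)) has_real_derivative 0) (at x)" by (simp add: kk_refl)
  qed
  have a: "F (x + pi + pi) - F (x + pi) = F (0 + pi) - F 0"
    using const_deriv0[OF d1, of "x+pi" 0] .
  have b: "F (x + pi) - F x = F (0 + pi) - F 0"
    using const_deriv0[OF d1, of x 0] .
  have c: "F (pi/2 + pi/2) + F (pi/2 - pi/2) = F (pi/2 + 0) + F (pi/2 - 0)"
    using const_deriv0[OF d2, of "pi/2" 0] .
  have "x + 2*pi = x + pi + pi" by simp
  then have "F (x + 2*pi) - F x = (F (x + pi + pi) - F (x + pi)) + (F (x + pi) - F x)" by (simp add: add.commute)
  also have "\<dots> = 4 * (F (pi/2) - F 0)" using a b c by simp
  finally show ?thesis .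
qed


lemma deriv_cont: assumes F: "\<And>x. (F has_real_derivative f x) (at x)"
  shows "continuous_on S F"
  using F by (meson DERIV_isCont continuous_at_imp_continuous_on)

lemma period_F:
  assumes E: "0 \<le> E" and F: "\<And>x. (F has_real_derivative kk E x) (at x)"
  shows "period E = 4 * (F (pi/2) - F 0)"
proof -
  let ?f = "\<lambda>s. 1 / sqrt ((Lambda_plus E + Lambda_minus E * s^2) * (1 - s^2))"
  define G where "G s = sqrt 3 / 2 * F (arcsin s)" for s
  have cF: "continuous_on UNIV F" by (rule deriv_cont[OF F])
  have "continuous_on {0..1} (\<lambda>s. F (arcsin s))"
    by (rule continuous_on_compose2[OF cF]) (auto intro!: continuous_intros)
  then have cG: "continuous_on {0..1} G" unfolding G_def by (intro continuous_intros)
  have dG: "(G has_vector_derivative ?f s) (at s)" if s: "s \<in> {0<..<1}" for s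
  proof -
    have "((\<lambda>s. F (arcsin s)) has_real_derivative kk E (arcsin s) * inverse (sqrt (1 - s^2))) (at s)"
      by (rule DERIV_chain2[OF F DERIV_arcsin]) (use s in auto)
    then have "(G has_real_derivative sqrt 3 / 2 * (kk E (arcsin s) * inverse (sqrt (1 - s^2)))) (at s)"
      unfolding G_def by (rule DERIV_cmult)
    moreover have "sqrt 3 / 2 * (kk E (arcsin s) * inverse (sqrt (1 - s^2))) = ?f s"
    proof -
      have ss: "sin (arcsin s) = s" using s by (simp add: sin_arcsin)
      show ?thesis unfolding kk_def gg_def ss real_sqrt_mult by (simp add: field_simps)
    qed
    ultimately show ?thesis by (simp add: has_real_derivative_iff_has_vector_derivative)
  qed
  have "(?f has_integral (G 1 - G 0)) {0..1}"
    by (rule fundamental_theorem_of_calculus_interior) (use cG dG in auto)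
  then have "integral {0..1} ?f = G 1 - G 0" by (rule integral_unique)
  then show ?thesis unfolding period_def G_def by (simp add: field_simps)
qed

lemma deriv_lower:
  assumes F: "\<And>x. (F has_real_derivative f x) (at x)" and m: "\<And>x. m \<le> f x" and xy: "x \<le> y"
  shows "m * (y - x) \<le> F y - F x"
proof -
  have "(\<lambda>t. F t - m * t) x \<le> (\<lambda>t. F t - m * t) y"
  proof (rule DERIV_nonneg_imp_nondecreasing[OF xy])
    fix t show "\<exists>d. ((\<lambda>t. F t - m * t) has_real_derivative d) (at t) \<and> 0 \<le> d"
      by (rule exI[of _ "f t - m"]) (auto intro!: derivative_eq_intros F simp: m)
  qed
  then show ?thesis by (simp add: algebra_simps)
qed

lemma deriv_upper:
  assumes F: "\<And>x. (F has_real_derivative f x) (at x)" and m: "\<And>x. f x \<le> M" and xy: "x \<le> y"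
  shows "F y - F x \<le> M * (y - x)"
proof -
  have "(\<lambda>t. M * t - F t) x \<le> (\<lambda>t. M * t - F t) y"
  proof (rule DERIV_nonneg_imp_nondecreasing[OF xy])
    fix t show "\<exists>d. ((\<lambda>t. M * t - F t) has_real_derivative d) (at t) \<and> 0 \<le> d"
      by (rule exI[of _ "M - f t"]) (auto intro!: derivative_eq_intros F simp: m)
  qed
  then show ?thesis by (simp add: algebra_simps)
qed

definition klo :: "real \<Rightarrow> real" where
  "klo E = 1 / (sqrt 3 / 2 * sqrt (Lambda_plus E + Lambda_minus E))"
definition khi :: "real \<Rightarrow> real" where
  "khi E = 1 / (sqrt 3 / 2 * sqrt (Lambda_plus E))"

lemma kk_bounds:
  assumes E: "0 \<le> E"
  shows "klo E \<le> kk E x" "kk E x \<le> khi E" "0 < klo E"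
proof -
  have s: "(sin x)^2 \<le> 1" "0 \<le> (sin x)^2" by (simp_all add: abs_square_le_1)
  have L: "0 \<le> Lambda_minus E" "Lambda_plus E = Lambda_minus E + 4" using Lam_basic[OF E] by auto
  have a: "Lambda_minus E * (sin x)^2 \<le> Lambda_minus E" using L s by (simp add: mult_left_le)
  have b: "0 \<le> Lambda_minus E * (sin x)^2" using L s by simp
  have p: "0 < Lambda_plus E" using L by simp
  have "sqrt (Lambda_plus E + Lambda_minus E * (sin x)^2) \<le> sqrt (Lambda_plus E + Lambda_minus E)"
    using a by simp
  moreover have "0 < sqrt (Lambda_plus E + Lambda_minus E * (sin x)^2)" using p b by simp
  ultimately show "klo E \<le> kk E x" unfolding klo_def kk_def gg_def
    by (simp add: frac_le divide_simps)
  have "sqrt (Lambda_plus E) \<le> sqrt (Lambda_plus E + Lambda_minus E * (sin x)^2)"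
    using b by simp
  moreover have "0 < sqrt (Lambda_plus E)" using p by simp
  ultimately show "kk E x \<le> khi E" unfolding khi_def kk_def gg_def
    by (simp add: frac_le divide_simps)
  show "0 < klo E" using L unfolding klo_def by simp
qed

lemma period_strict_mono:
  assumes E1: "0 \<le> E1" and E12: "E1 < E2"
  shows "period E2 < period E1"
proof -
  have E2: "0 \<le> E2" using E1 E12 by simp
  obtain F1 where F1: "\<And>x. (F1 has_real_derivative kk E1 x) (at x)" using antideriv[OF E1] by blast
  obtain F2 where F2: "\<And>x. (F2 has_real_derivative kk E2 x) (at x)" using antideriv[OF E2] by blast
  have lt: "kk E2 x < kk E1 x" for x
  proof -
    have "sqrt (1 + 2/3*E1) < sqrt (1 + 2/3*E2)" using E12 by simp
    then have lp: "Lambda_plus E1 < Lambda_plus E2" and lm: "Lambda_minus E1 < Lambda_minus E2"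
      by (simp_all add: Lambda_plus_def Lambda_minus_def)
    have "Lambda_minus E1 * (sin x)^2 \<le> Lambda_minus E2 * (sin x)^2"
      using lm by (simp add: mult_right_mono)
    then have "Lambda_plus E1 + Lambda_minus E1 * (sin x)^2 < Lambda_plus E2 + Lambda_minus E2 * (sin x)^2"
      using lp by simp
    then have "gg E1 x < gg E2 x" unfolding gg_def by simp
    then show ?thesis unfolding kk_def using gg_pos[OF E1, of x] by (simp add: frac_less2)
  qed
  have "(\<lambda>x. F1 x - F2 x) 0 < (\<lambda>x. F1 x - F2 x) (pi/2)"
  proof (rule DERIV_pos_imp_increasing[where f="\<lambda>x. F1 x - F2 x"])
    fix x show "\<exists>y. ((\<lambda>x. F1 x - F2 x) has_real_derivative y) (at x) \<and> 0 < y"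
      by (rule exI[of _ "kk E1 x - kk E2 x"]) (auto intro!: derivative_eq_intros F1 F2 simp: lt)
  qed simp
  then show ?thesis using period_F[OF E1 F1] period_F[OF E2 F2] by simp
qed

lemma period_bounds:
  assumes E: "0 \<le> E"
  shows "2 * pi * klo E \<le> period E" "period E \<le> 2 * pi * khi E"
proof -
  obtain F where F: "\<And>x. (F has_real_derivative kk E x) (at x)" using antideriv[OF E] by blast
  have l: "klo E * (pi/2 - 0) \<le> F (pi/2) - F 0"
    by (rule deriv_lower[OF F]) (use kk_bounds[OF E] in auto)
  have "2*pi*klo E = 4*(klo E * (pi/2 - 0))" by simp
  also have "\<dots> \<le> 4*(F (pi/2) - F 0)" by (rule mult_left_mono[OF l]) simp
  also have "\<dots> = period E" using period_F[OF E F] by simp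
  finally show "2 * pi * klo E \<le> period E" .
  have l: "F (pi/2) - F 0 \<le> khi E * (pi/2 - 0)"
    by (rule deriv_upper[OF F]) (use kk_bounds[OF E] in auto)
  have "period E = 4*(F (pi/2) - F 0)" using period_F[OF E F] by simp
  also have "\<dots> \<le> 4*(khi E * (pi/2 - 0))" by (rule mult_left_mono[OF l]) simp
  also have "\<dots> = 2*pi*khi E" by simp
  finally show "period E \<le> 2 * pi * khi E" .
qed

lemma period_lim: "(period \<longlongrightarrow> 2 * pi / sqrt 3) (at_right 0)"
proof (rule tendsto_sandwich)
  show "\<forall>\<^sub>F E in at_right 0. 2 * pi * klo E \<le> period E"
    using period_bounds(1) by (auto simp: eventually_at_right_less intro: eventually_mono[OF eventually_at_right_less[of 0]])
  show "\<forall>\<^sub>F E in at_right 0. period E \<le> 2 * pi * khi E"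
    using period_bounds(2) by (auto intro: eventually_mono[OF eventually_at_right_less[of 0]])
  have "((\<lambda>E. 2 * pi * klo E) \<longlongrightarrow> 2 * pi * (1 / (sqrt 3 / 2 * sqrt (4 + 0)))) (at_right 0)"
    unfolding klo_def Lambda_plus_def Lambda_minus_def
    by (rule tendsto_eq_intros refl | simp)+
  then show "((\<lambda>E. 2 * pi * klo E) \<longlongrightarrow> 2 * pi / sqrt 3) (at_right 0)" by simp
  have "((\<lambda>E. 2 * pi * khi E) \<longlongrightarrow> 2 * pi * (1 / (sqrt 3 / 2 * sqrt (4)))) (at_right 0)"
    unfolding khi_def Lambda_plus_def
    by (rule tendsto_eq_intros refl | simp)+
  then show "((\<lambda>E. 2 * pi * khi E) \<longlongrightarrow> 2 * pi / sqrt 3) (at_right 0)" by simp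
qed


lemma X_pos: "0 \<le> E \<Longrightarrow> 0 < Lambda_plus E + Lambda_minus E * (sin x)^2"
  using gg_pos[of E x] by (simp add: gg_def zero_less_mult_iff)

lemma dgg:
  assumes E: "0 \<le> E"
  shows "(gg E has_real_derivative 3/4 * Lambda_minus E * sin x * cos x / gg E x) (at x)"
proof -
  let ?X = "Lambda_plus E + Lambda_minus E * (sin x)^2"
  have X: "0 < ?X" by (rule X_pos[OF E])
  have s3: "sqrt 3 * sqrt 3 = 3" by simp
  have d1: "((\<lambda>x. Lambda_plus E + Lambda_minus E * (sin x)^2) has_real_derivative Lambda_minus E * (2 * sin x * cos x)) (at x)"
    by (auto intro!: derivative_eq_intros)
  have d2: "((\<lambda>x. sqrt (Lambda_plus E + Lambda_minus E * (sin x)^2)) has_real_derivative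
      inverse (sqrt ?X) / 2 * (Lambda_minus E * (2 * sin x * cos x))) (at x)"
    by (rule DERIV_chain2[OF DERIV_real_sqrt[OF X] d1])
  have d3: "((\<lambda>x. sqrt 3 / 2 * sqrt (Lambda_plus E + Lambda_minus E * (sin x)^2)) has_real_derivative
      sqrt 3 / 2 * (inverse (sqrt ?X) / 2 * (Lambda_minus E * (2 * sin x * cos x)))) (at x)"
    by (rule DERIV_cmult[OF d2])
  have eq: "sqrt 3 / 2 * (inverse (sqrt ?X) / 2 * (Lambda_minus E * (2 * sin x * cos x))) = 3/4 * Lambda_minus E * sin x * cos x / gg E x"
    unfolding gg_def using X by (simp add: field_simps s3)
  show ?thesis using d3 unfolding eq gg_def[abs_def] .
qed



lemma energy_const:
  assumes d1: "\<And>t. (y has_real_derivative v t) (at t)"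
    and d2: "\<And>t. (v has_real_derivative -(3 * y t + 3/2 * (y t)^3)) (at t)"
  shows "energy (y t) (v t) = energy (y 0) (v 0)"
proof -
  have "((\<lambda>t. energy (y t) (v t)) has_real_derivative 0) (at t)" for t
    unfolding energy_def
    by (rule derivative_eq_intros d1 d2 refl | simp)+ (simp add: algebra_simps power2_eq_square power3_eq_cube)
  then show ?thesis using DERIV_isconst_all by blast
qed

lemma energy_nonneg: "0 \<le> energy a b"
  unfolding energy_def by simp

lemma energy_bound: "a^2 \<le> energy a b"
proof -
  have "0 \<le> b^2/2" "0 \<le> 3/8 * a^4" "0 \<le> a^2" by simp_all
  then show ?thesis unfolding energy_def by linarith
qed

lemma two_uv: "\<bar>2 * u * v\<bar> \<le> u^2 + (v::real)^2"
proof -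
  have "0 \<le> (u - v)^2" "0 \<le> (u + v)^2" by simp_all
  then have "2 * u * v \<le> u^2 + v^2" "0 \<le> u^2 + v^2 + 2 * u * v" by (simp_all add: power2_eq_square algebra_simps)
  then show ?thesis by linarith
qed

lemma gronwall0:
  fixes w :: "real \<Rightarrow> real"
  assumes dw: "\<And>t. (w has_real_derivative w' t) (at t)"
    and bd: "\<And>t. \<bar>w' t\<bar> \<le> C * w t" and nn: "\<And>t. 0 \<le> w t" and w0: "w 0 = 0"
  shows "w t = 0"
proof (cases "0 \<le> t")
  case True
  have "(\<lambda>s. w s * exp (- C * s)) t \<le> (\<lambda>s. w s * exp (- C * s)) 0"
  proof (rule DERIV_nonpos_imp_nonincreasing[OF True])
    fix s
    have "w' s - C * w s \<le> 0" using bd[of s] by linarith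
    then have "(w' s - C * w s) * exp (- C * s) \<le> 0" by (simp add: mult_nonpos_nonneg)
    moreover have "((\<lambda>s. w s * exp (- C * s)) has_real_derivative (w' s - C * w s) * exp (- C * s)) (at s)"
      by (rule derivative_eq_intros dw refl | simp)+ (simp add: algebra_simps)
    ultimately show "\<exists>y. ((\<lambda>s. w s * exp (- C * s)) has_real_derivative y) (at s) \<and> y \<le> 0" by blast
  qed
  then have "w t * exp (- C * t) \<le> 0" using w0 by simp
  then have "w t \<le> 0" by (simp add: mult_le_0_iff)
  then show ?thesis using nn[of t] by simp
next
  case False
  then have t: "t \<le> 0" by simp
  have "(\<lambda>s. w s * exp (C * s)) t \<le> (\<lambda>s. w s * exp (C * s)) 0"
  proof (rule DERIV_nonneg_imp_nondecreasing[OF t])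
    fix s
    have "0 \<le> w' s + C * w s" using bd[of s] by linarith
    then have "0 \<le> (w' s + C * w s) * exp (C * s)" by simp
    moreover have "((\<lambda>s. w s * exp (C * s)) has_real_derivative (w' s + C * w s) * exp (C * s)) (at s)"
      by (rule derivative_eq_intros dw refl | simp)+ (simp add: algebra_simps)
    ultimately show "\<exists>y. ((\<lambda>s. w s * exp (C * s)) has_real_derivative y) (at s) \<and> 0 \<le> y" by blast
  qed
  then have "w t * exp (C * t) \<le> 0" using w0 by simp
  then have "w t \<le> 0" by (simp add: mult_le_0_iff)
  then show ?thesis using nn[of t] by simp
qed

lemma uniq:
  assumes a1: "\<And>t. (y1 has_real_derivative v1 t) (at t)"
    and a2: "\<And>t. (v1 has_real_derivative -(3 * y1 t + 3/2 * (y1 t)^3)) (at t)"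
    and b1: "\<And>t. (y2 has_real_derivative v2 t) (at t)"
    and b2: "\<And>t. (v2 has_real_derivative -(3 * y2 t + 3/2 * (y2 t)^3)) (at t)"
    and i1: "y1 0 = y2 0" and i2: "v1 0 = v2 0"
  shows "y1 t = y2 t"
proof -
  define E where "E = energy (y1 0) (v1 0)"
  have E1: "(y1 t)^2 \<le> E" for t
    using energy_const[OF a1 a2, of t] energy_bound[of "y1 t" "v1 t"] by (simp add: E_def)
  have E2: "(y2 t)^2 \<le> E" for t
    using energy_const[OF b1 b2, of t] energy_bound[of "y2 t" "v2 t"] by (simp add: E_def i1 i2)
  define q where "q t = 3 + 3/2 * ((y1 t)^2 + y1 t * y2 t + (y2 t)^2)" for t
  define L where "L = 3 + 9/2 * E"
  have q: "0 \<le> q t \<and> q t \<le> L" for t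
  proof -
    have "0 \<le> (y1 t + y2 t)^2" "0 \<le> (y1 t - y2 t)^2" by simp_all
    then have "0 \<le> (y1 t)^2 + y1 t * y2 t + (y2 t)^2"
      "(y1 t)^2 + y1 t * y2 t + (y2 t)^2 \<le> 3/2 * ((y1 t)^2 + (y2 t)^2)"
      by (simp_all add: power2_eq_square algebra_simps)
    then show ?thesis using E1[of t] E2[of t] unfolding q_def L_def by (auto simp: field_simps)
  qed
  define w where "w t = (y1 t - y2 t)^2 + (v1 t - v2 t)^2" for t
  define w' where "w' t = 2 * (y1 t - y2 t) * (v1 t - v2 t) * (1 - q t)" for t
  have dw: "(w has_real_derivative w' t) (at t)" for t
  proof -
    have "((\<lambda>t. (y1 t - y2 t)^2 + (v1 t - v2 t)^2) has_real_derivative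
       2 * (y1 t - y2 t) * (v1 t - v2 t) + 2 * (v1 t - v2 t) * (-(3 * y1 t + 3/2 * (y1 t)^3) + (3 * y2 t + 3/2 * (y2 t)^3))) (at t)"
      by (rule derivative_eq_intros a1 a2 b1 b2 refl | simp)+ (simp add: algebra_simps)
    moreover have "2 * (y1 t - y2 t) * (v1 t - v2 t) + 2 * (v1 t - v2 t) * (-(3 * y1 t + 3/2 * (y1 t)^3) + (3 * y2 t + 3/2 * (y2 t)^3)) = w' t"
      unfolding w'_def q_def by (simp add: field_simps power2_eq_square power3_eq_cube)
    ultimately show ?thesis unfolding w_def[abs_def] by simp
  qed
  have nn: "0 \<le> w t" for t unfolding w_def by simp
  have bd: "\<bar>w' t\<bar> \<le> (1 + L) * w t" for t
  proof -
    let ?u = "y1 t - y2 t" and ?v = "v1 t - v2 t"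
    have h1: "\<bar>2 * ?u * ?v\<bar> \<le> w t" unfolding w_def by (rule two_uv)
    have h2: "\<bar>1 - q t\<bar> \<le> 1 + L" using q[of t] by linarith
    have "\<bar>w' t\<bar> = \<bar>2 * ?u * ?v\<bar> * \<bar>1 - q t\<bar>" unfolding w'_def by (simp add: abs_mult)
    also have "\<dots> \<le> w t * (1 + L)" by (rule mult_mono[OF h1 h2]) (simp_all add: nn)
    finally show ?thesis by (simp add: mult.commute)
  qed
  have "w t = 0"
    by (rule gronwall0[OF dw bd nn]) (simp add: w_def i1 i2)
  then show ?thesis unfolding w_def
    by (simp add: add_nonneg_eq_0_iff)
qed



lemma Lm_identity:
  assumes E: "0 \<le> E"
  shows "(Lambda_minus E)^2 + 4 * Lambda_minus E = 8/3 * E"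
proof -
  define S where "S = sqrt (1 + 2/3 * E)"
  have S2: "S^2 = 1 + 2/3 * E" unfolding S_def using E by simp
  have L: "Lambda_minus E = 2 * S - 2" unfolding S_def Lambda_minus_def by simp
  have "(Lambda_minus E)^2 + 4 * Lambda_minus E = 4 * S^2 - 4" unfolding L by (simp add: power2_eq_square algebra_simps)
  then show ?thesis using S2 by simp
qed

lemma alpha_le:
  assumes E: "E = energy \<alpha> \<beta>"
  shows "\<alpha>^2 \<le> Lambda_minus E"
proof -
  have E0: "0 \<le> E" using E energy_nonneg by simp
  have L0: "0 \<le> Lambda_minus E" using Lam_basic[OF E0] by simp
  have "3/2*\<alpha>^2 + 3/8*\<alpha>^4 \<le> E" using E unfolding energy_def by simp
  then have "(\<alpha>^2 + 2)^2 \<le> (Lambda_minus E + 2)^2"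
    using Lm_identity[OF E0] by (simp add: power2_eq_square power4_eq_xxxx algebra_simps)
  then have "\<alpha>^2 + 2 \<le> Lambda_minus E + 2"
    by (rule power2_le_imp_le) (use L0 in simp)
  then show ?thesis by simp
qed

lemma beta_eq:
  assumes E: "E = energy \<alpha> \<beta>"
  shows "\<beta>^2 = 3/4 * (Lambda_minus E - \<alpha>^2) * (Lambda_minus E + 4 + \<alpha>^2)"
proof -
  have E0: "0 \<le> E" using E energy_nonneg by simp
  have "\<beta>^2 = 2 * E - 3 * \<alpha>^2 - 3/4 * \<alpha>^4" using E unfolding energy_def by simp
  then show ?thesis using Lm_identity[OF E0] by (simp add: power2_eq_square power4_eq_xxxx algebra_simps)
qed

lemma init_angle:
  assumes E: "E = energy \<alpha> \<beta>"
  shows "\<exists>\<phi>0. sqrt (Lambda_minus E) * sin \<phi>0 = \<alpha> \<and> sqrt (Lambda_minus E) * cos \<phi>0 * gg E \<phi>0 = \<beta>"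
proof -
  have E0: "0 \<le> E" using E energy_nonneg by simp
  have L0: "0 \<le> Lambda_minus E" using Lam_basic[OF E0] by simp
  define A where "A = sqrt (Lambda_minus E)"
  have A2: "A^2 = Lambda_minus E" unfolding A_def using L0 by simp
  show ?thesis
  proof (cases "Lambda_minus E = 0")
    case True
    then have "E = 0" using Lm_identity[OF E0] by simp
    then have e0: "\<beta>^2/2 + 3/2*\<alpha>^2 + 3/8*\<alpha>^4 = 0" using E unfolding energy_def by simp
    have "0 \<le> \<beta>^2" "0 \<le> \<alpha>^2" "0 \<le> \<alpha>^4" by simp_all
    then have "\<alpha>^2 = 0" "\<beta>^2 = 0" using e0 by linarith+
    then have "\<alpha> = 0 \<and> \<beta> = 0" by simp
    then show ?thesis using True by (intro exI[of _ 0]) simp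
  next
    case False
    then have Lp: "0 < Lambda_minus E" using L0 by simp
    then have Ap: "0 < A" unfolding A_def by simp
    define s0 where "s0 = \<alpha> / A"
    define g0 where "g0 = sqrt 3 / 2 * sqrt (Lambda_plus E + Lambda_minus E * s0^2)"
    have g0p: "0 < g0" unfolding g0_def using Lam_basic[OF E0] Lp
      by (intro mult_pos_pos) (simp_all add: add_pos_nonneg)
    define c0 where "c0 = \<beta> / (A * g0)"
    have as: "Lambda_minus E * s0^2 = \<alpha>^2" unfolding s0_def A2[symmetric] using Ap
      by (simp add: power_divide)
    have X: "0 \<le> Lambda_plus E + Lambda_minus E * s0^2" using Lam_basic[OF E0] as by simp
    have "g0^2 = 3/4 * (Lambda_plus E + Lambda_minus E * s0^2)"
      unfolding g0_def using X by (simp add: power_mult_distrib power_divide)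
    then have g02: "g0^2 = 3/4 * (Lambda_minus E + 4 + \<alpha>^2)"
      using Lam_basic[OF E0] as by simp
    have "c0^2 = \<beta>^2 / (A^2 * g0^2)" unfolding c0_def by (simp add: power_divide power_mult_distrib)
    also have "\<dots> = (Lambda_minus E - \<alpha>^2) / Lambda_minus E"
    proof -
      have K: "0 < Lambda_minus E + 4 + \<alpha>^2" using Lp by (simp add: add_pos_nonneg)
      have gen: "3/4*(L-a)*K/(L*(3/4*K)) = (L-a)/L" if "0 < L" "0 < K" for L a K :: real
        using that by (simp add: field_simps)
      show ?thesis unfolding beta_eq[OF E] A2 g02 by (rule gen[OF Lp K])
    qed
    finally have c2: "c0^2 = (Lambda_minus E - \<alpha>^2) / Lambda_minus E" .
    have s2: "s0^2 = \<alpha>^2 / Lambda_minus E" unfolding s0_def using A2 by (simp add: power_divide)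
    have "c0^2 + s0^2 = (Lambda_minus E - \<alpha>^2) / Lambda_minus E + \<alpha>^2 / Lambda_minus E"
      unfolding c2 s2 ..
    also have "\<dots> = 1" using Lp by (simp add: field_simps)
    finally have "c0^2 + s0^2 = 1" .
    then obtain t where t: "c0 = cos t" "s0 = sin t" by (rule sincos_total_2pi)
    have "A * sin t = \<alpha>" unfolding t(2)[symmetric] s0_def using Ap by simp
    moreover have "gg E t = g0" unfolding gg_def g0_def t(2) ..
    moreover have "A * cos t * gg E t = \<beta>" unfolding t(1)[symmetric] \<open>gg E t = g0\<close> c0_def
      using Ap g0p by simp
    ultimately show ?thesis unfolding A_def by blast
  qed
qed

lemma existence:
  fixes \<alpha> \<beta> :: real
  assumes Edef: "E = energy \<alpha> \<beta>"
  shows "\<exists>y v. (\<forall>t. (y has_real_derivative v t) (at t)) \<and>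
     (\<forall>t. (v has_real_derivative -(3 * y t + 3/2 * (y t)^3)) (at t)) \<and> y 0 = \<alpha> \<and> v 0 = \<beta> \<and>
     (\<forall>t. y (t + period E) = y t) \<and>
     ((\<alpha>, \<beta>) \<noteq> (0, 0) \<longrightarrow> (\<forall>\<tau>. 0 < \<tau> \<and> \<tau> < period E \<longrightarrow> (\<exists>t. y (t + \<tau>) \<noteq> y t)))"
proof -
  have E0: "0 \<le> E" using Edef energy_nonneg by simp
  define Lm where "Lm = Lambda_minus E"
  have L0: "0 \<le> Lm" and Lp: "Lambda_plus E = Lm + 4" using Lam_basic[OF E0] by (auto simp: Lm_def)
  define A where "A = sqrt Lm"
  have A2: "A^2 = Lm" unfolding A_def using L0 by simp
  obtain \<phi>0 where i1: "A * sin \<phi>0 = \<alpha>" and i2: "A * cos \<phi>0 * gg E \<phi>0 = \<beta>"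
    using init_angle[OF Edef] unfolding A_def Lm_def by blast
  obtain F where F0: "F \<phi>0 = 0" and F: "\<And>x. (F has_real_derivative kk E x) (at x)"
    using antideriv[OF E0] by blast
  define m where "m = klo E"
  have m: "0 < m" "\<And>x. m \<le> kk E x" using kk_bounds[OF E0] by (auto simp: m_def)
  have Flow: "m * (y - x) \<le> F y - F x" if "x \<le> y" for x y
    by (rule deriv_lower[OF F m(2) that])
  have Fmono: "F x < F y" if "x < y" for x y
  proof -
    have "0 < m * (y - x)" using m(1) that by simp
    then show ?thesis using Flow[of x y] that by simp
  qed
  have Fmono': "x \<le> y" if "F x \<le> F y" for x y
    using Fmono[of y x] that by force
  have cF: "isCont F x" for x using F DERIV_isCont by blast
  have surjF: "\<exists>x. F x = t" for t
  proof -
    define a where "a = \<phi>0 - \<bar>t\<bar> / m"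
    define b where "b = \<phi>0 + \<bar>t\<bar> / m"
    have ab: "a \<le> \<phi>0" "\<phi>0 \<le> b" unfolding a_def b_def using m(1) by simp_all
    have "m * (\<phi>0 - a) \<le> F \<phi>0 - F a" by (rule Flow[OF ab(1)])
    moreover have "m * (\<phi>0 - a) = \<bar>t\<bar>" unfolding a_def using m(1) by simp
    ultimately have Fa: "F a \<le> t" using F0 by linarith
    have "m * (b - \<phi>0) \<le> F b - F \<phi>0" by (rule Flow[OF ab(2)])
    moreover have "m * (b - \<phi>0) = \<bar>t\<bar>" unfolding b_def using m(1) by simp
    ultimately have Fb: "t \<le> F b" using F0 by linarith
    show ?thesis using IVT[of F a t b] Fa Fb ab cF by force
  qed
  have injF: "inj F"
    by (rule linorder_injI) (use Fmono in force)
  have surj: "surj F" using surjF by (metis surjI)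
  define \<phi> where "\<phi> = inv F"
  have F\<phi>: "F (\<phi> t) = t" for t unfolding \<phi>_def using surj by (simp add: surj_f_inv_f)
  have \<phi>F: "\<phi> (F x) = x" for x unfolding \<phi>_def using injF by simp
  have lip: "(1/m)-lipschitz_on UNIV \<phi>"
  proof (rule lipschitz_onI)
    fix s t :: real
    have "\<bar>\<phi> s - \<phi> t\<bar> \<le> \<bar>s - t\<bar> / m"
    proof (cases "\<phi> s \<le> \<phi> t")
      case True
      then have "m * (\<phi> t - \<phi> s) \<le> t - s" using Flow[OF True] F\<phi> by simp
      then show ?thesis using True m(1) by (simp add: field_simps)
    next
      case False
      then have "m * (\<phi> s - \<phi> t) \<le> s - t" using Flow[of "\<phi> t" "\<phi> s"] F\<phi> by simp
      then show ?thesis using False m(1) by (simp add: field_simps)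
    qed
    then show "dist (\<phi> s) (\<phi> t) \<le> 1 / m * dist s t" by (simp add: dist_real_def)
  qed (use m(1) in simp)
  have c\<phi>: "isCont \<phi> t" for t
    using lipschitz_on_continuous_on[OF lip] by (simp add: continuous_on_eq_continuous_at)
  have d\<phi>: "(\<phi> has_real_derivative gg E (\<phi> t)) (at t)" for t
  proof -
    have "(\<phi> has_real_derivative inverse (kk E (\<phi> t))) (at t)"
      by (rule DERIV_inverse_function[where f=F and a="t - 1" and b="t + 1"])
         (use F kk_pos[OF E0, of "\<phi> t"] F\<phi> c\<phi> in auto)
    then show ?thesis unfolding kk_def by simp
  qed
  define y where "y t = A * sin (\<phi> t)" for t
  define v where "v t = A * cos (\<phi> t) * gg E (\<phi> t)" for t
  have dy: "(y has_real_derivative v t) (at t)" for t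
  proof -
    have "((\<lambda>t. A * sin (\<phi> t)) has_real_derivative A * (cos (\<phi> t) * gg E (\<phi> t))) (at t)"
      by (intro DERIV_cmult DERIV_chain2[OF DERIV_sin d\<phi>])
    then show ?thesis unfolding y_def[abs_def] v_def by (simp add: mult.assoc)
  qed
  have dv: "(v has_real_derivative -(3 * y t + 3/2 * (y t)^3)) (at t)" for t
  proof -
    let ?s = "sin (\<phi> t)" and ?c = "cos (\<phi> t)" and ?G = "gg E (\<phi> t)"
    have Gp: "?G \<noteq> 0" using gg_pos[OF E0, of "\<phi> t"] by simp
    have dG0: "((\<lambda>t. gg E (\<phi> t)) has_real_derivative (3/4 * Lm * ?s * ?c / ?G) * ?G) (at t)"
      using DERIV_chain2[OF dgg[OF E0] d\<phi>] by (simp add: Lm_def)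
    have eqG: "(3/4 * Lm * ?s * ?c / ?G) * ?G = 3/4 * Lm * ?s * ?c" using Gp by simp
    have dG: "((\<lambda>t. gg E (\<phi> t)) has_real_derivative 3/4 * Lm * ?s * ?c) (at t)"
      using dG0 unfolding eqG .
    have dc: "((\<lambda>t. cos (\<phi> t)) has_real_derivative - ?s * ?G) (at t)"
      using DERIV_chain2[OF DERIV_cos d\<phi>] by simp
    have "((\<lambda>t. A * cos (\<phi> t) * gg E (\<phi> t)) has_real_derivative
       A * (- ?s * ?G) * ?G + A * ?c * (3/4 * Lm * ?s * ?c)) (at t)"
      by (rule DERIV_cong[OF DERIV_mult[OF DERIV_cmult[OF dc, of A] dG]]) (simp add: algebra_simps)
    moreover have "A * (- ?s * ?G) * ?G + A * ?c * (3/4 * Lm * ?s * ?c) = -(3 * y t + 3/2 * (y t)^3)"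
    proof -
      have G2: "?G * ?G = 3/4 * (Lm + 4 + Lm * ?s^2)"
        unfolding gg_def using X_pos[OF E0, of "\<phi> t"] Lp
        by (simp add: Lm_def power_mult_distrib real_sqrt_mult[symmetric] )
      have c2: "?c^2 = 1 - ?s^2" by (simp add: cos_squared_eq)
      have "A * (- ?s * ?G) * ?G + A * ?c * (3/4 * Lm * ?s * ?c)
          = A * ?s * (- (?G * ?G) + 3/4 * Lm * ?c^2)" by (simp add: power2_eq_square algebra_simps)
      also have "\<dots> = A * ?s * (- 3 - 3/2 * A^2 * ?s^2)" unfolding G2 c2 A2 by (simp add: field_simps power2_eq_square)
      also have "\<dots> = -(3 * y t + 3/2 * (y t)^3)" unfolding y_def by (simp add: power2_eq_square power3_eq_cube algebra_simps)
      finally show ?thesis .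
    qed
    ultimately show ?thesis unfolding v_def[abs_def] by simp
  qed
  have \<phi>0: "\<phi> 0 = \<phi>0" using \<phi>F[of \<phi>0] F0 by simp
  have y0: "y 0 = \<alpha>" unfolding y_def \<phi>0 using i1 .
  have v0: "v 0 = \<beta>" unfolding v_def \<phi>0 using i2 .
  define P where "P = period E"
  have P: "P = 4 * (F (pi/2) - F 0)" unfolding P_def by (rule period_F[OF E0 F])
  have Fsh: "F (x + 2*pi) = F x + P" for x using F_shift[OF F, of x] P by simp
  have \<phi>sh: "\<phi> (t + P) = \<phi> t + 2*pi" for t
  proof -
    have "\<phi> (t + P) = \<phi> (F (\<phi> t + 2*pi))" using Fsh[of "\<phi> t"] F\<phi> by simp
    then show ?thesis using \<phi>F by simp
  qed
  have per: "y (t + P) = y t" for t unfolding y_def \<phi>sh by simp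
  have \<phi>mono: "\<phi> s < \<phi> t" if "s < t" for s t
  proof -
    have "\<phi> s \<le> \<phi> t" using Fmono'[of "\<phi> s" "\<phi> t"] F\<phi> that by simp
    moreover have "\<phi> s \<noteq> \<phi> t" using F\<phi>[of s] F\<phi>[of t] that by (metis less_irrefl)
    ultimately show ?thesis by simp
  qed
  have minimal: "\<exists>t. y (t + \<tau>) \<noteq> y t" if ab: "(\<alpha>, \<beta>) \<noteq> (0, 0)" and \<tau>: "0 < \<tau>" "\<tau> < P" for \<tau>
  proof -
    have "0 < E"
    proof (cases "\<alpha> = 0")
      case True
      then have "\<beta> \<noteq> 0" using ab by simp
      then show ?thesis unfolding Edef energy_def True by simp
    next
      case False
      then have "0 < \<alpha>^2" by simp
      then show ?thesis using energy_bound[of \<alpha> \<beta>] Edef by linarith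
    qed
    then have "Lm \<noteq> 0" using Lm_identity[OF E0] unfolding Lm_def by auto
    then have Ap: "0 < A" unfolding A_def using L0 by simp
    define t0 where "t0 = F (pi/2)"
    have pt0: "\<phi> t0 = pi/2" unfolding t0_def by (rule \<phi>F)
    define x where "x = \<phi> (t0 + \<tau>)"
    have x1: "pi/2 < x" unfolding x_def using \<phi>mono[of t0 "t0 + \<tau>"] \<tau> pt0 by simp
    have x2: "x < pi/2 + 2*pi" unfolding x_def using \<phi>mono[of "t0 + \<tau>" "t0 + P"] \<tau> pt0 \<phi>sh[of t0] by simp
    have "sin x \<noteq> 1"
    proof
      assume "sin x = 1"
      then obtain n :: int where n: "x = (2 * n + 1/2) * pi" by (auto simp: sin_eq_1)
      have "0 < real_of_int n * pi" using x1 n by (simp add: algebra_simps)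
      then have "0 < n" by (simp add: zero_less_mult_iff)
      have "real_of_int n * pi < 1 * pi" using x2 n by (simp add: algebra_simps)
      then have "n < 1" by simp
      then show False using \<open>0 < n\<close> by simp
    qed
    then have "y (t0 + \<tau>) \<noteq> y t0" unfolding y_def pt0 x_def[symmetric] using Ap by simp
    then show ?thesis by blast
  qed
  show ?thesis
    apply (rule exI[of _ y], rule exI[of _ v])
    using dy dv y0 v0 per minimal unfolding P_def by blast
qed


lemma ivp_unique:
  assumes "ivp_sol \<alpha> \<beta> y1" "ivp_sol \<alpha> \<beta> y2"
  shows "y1 = y2"
proof
  fix t
  obtain v1 where a: "\<forall>t. (y1 has_real_derivative v1 t) (at t)"
    "\<forall>t. (v1 has_real_derivative - (3 * y1 t + 3/2 * (y1 t)^3)) (at t)" "y1 0 = \<alpha>" "v1 0 = \<beta>"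
    using assms(1) unfolding ivp_sol_def by blast
  obtain v2 where b: "\<forall>t. (y2 has_real_derivative v2 t) (at t)"
    "\<forall>t. (v2 has_real_derivative - (3 * y2 t + 3/2 * (y2 t)^3)) (at t)" "y2 0 = \<alpha>" "v2 0 = \<beta>"
    using assms(2) unfolding ivp_sol_def by blast
  show "y1 t = y2 t"
    by (rule uniq[of y1 v1 y2 v2]) (use a b in auto)
qed

theorem lemma8p1:
  fixes \<alpha> \<beta> :: real
  shows "(\<exists>!y. ivp_sol \<alpha> \<beta> y) \<and>
    (\<forall>y. ivp_sol \<alpha> \<beta> y \<longrightarrow>
        (\<forall>t. y (t + period (energy \<alpha> \<beta>)) = y t) \<and>
        ((\<alpha>, \<beta>) \<noteq> (0, 0) \<longrightarrow>
           (\<forall>\<tau>. 0 < \<tau> \<and> \<tau> < period (energy \<alpha> \<beta>) \<longrightarrow> (\<exists>t. y (t + \<tau>) \<noteq> y t)))) \<and>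
    (\<forall>E1 E2. 0 \<le> E1 \<and> E1 < E2 \<longrightarrow> period E2 < period E1) \<and>
    (period \<longlongrightarrow> 2 * pi / sqrt 3) (at_right 0)"
proof -
  obtain y0 v0 where y0: "\<forall>t. (y0 has_real_derivative v0 t) (at t)"
     "\<forall>t. (v0 has_real_derivative -(3 * y0 t + 3/2 * (y0 t)^3)) (at t)" "y0 0 = \<alpha>" "v0 0 = \<beta>"
     "\<forall>t. y0 (t + period (energy \<alpha> \<beta>)) = y0 t"
     "(\<alpha>, \<beta>) \<noteq> (0, 0) \<longrightarrow> (\<forall>\<tau>. 0 < \<tau> \<and> \<tau> < period (energy \<alpha> \<beta>) \<longrightarrow> (\<exists>t. y0 (t + \<tau>) \<noteq> y0 t))"
    using existence[OF refl, of \<alpha> \<beta>] by blast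
  have iv: "ivp_sol \<alpha> \<beta> y0" unfolding ivp_sol_def using y0(1-4) by blast
  have u: "y = y0" if "ivp_sol \<alpha> \<beta> y" for y using ivp_unique[OF that iv] .
  have A: "\<exists>!y. ivp_sol \<alpha> \<beta> y" using iv u by blast
  have B: "\<forall>y. ivp_sol \<alpha> \<beta> y \<longrightarrow>
        (\<forall>t. y (t + period (energy \<alpha> \<beta>)) = y t) \<and>
        ((\<alpha>, \<beta>) \<noteq> (0, 0) \<longrightarrow>
           (\<forall>\<tau>. 0 < \<tau> \<and> \<tau> < period (energy \<alpha> \<beta>) \<longrightarrow> (\<exists>t. y (t + \<tau>) \<noteq> y t)))"
    using u y0(5,6) by blast
  have C: "\<forall>E1 E2. 0 \<le> E1 \<and> E1 < E2 \<longrightarrow> period E2 < period E1"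
    using period_strict_mono by blast
  show ?thesis using A B C period_lim by blast
qed

end
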